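(* The logic $\mathsf{ICK}\oplus(p\mathrel{\Box\!\!\!\rightarrow} p)\oplus(((p\mathrel{\Box\!\!\!\rightarrow} q)\wedge(q\mathrel{\Box\!\!\!\rightarrow} r))\to(p\mathrel{\Box\!\!\!\rightarrow} r))\oplus((p\to q)\to(p\mathrel{\Box\!\!\!\rightarrow} q))$ is sound and complete with respect to the conditional frames $(X,\leq,\mathcal{R})$ satisfying, for all $x\in X$ and upsets $a,b$: $R_a[x]\subseteq{\uparrow}x\cap a$, and $R_a[x]\subseteq b$ implies $R_a[x]\subseteq{\uparrow}R_b[x]$.
   Context: Formulas: $\phi ::= p\mid\bot\mid\phi\wedge\phi\mid\phi\vee\phi\mid\phi\to\phi\mid\phi\mathrel{\Box\!\!\!\rightarrow}\phi$. $\mathsf{ICK}\oplus\Gamma$ is the smallest set containing intuitionistic propositional logic, $\Gamma$, $(p\mathrel{\Box\!\!\!\rightarrow}(q\wedge r))\leftrightarrow((p\mathrel{\Box\!\!\!\rightarrow} q)\wedge(p\mathrel{\Box\!\!\!\rightarrow} r))$ and $(p\mathrel{\Box\!\!\!\rightarrow}\top)\leftrightarrow\top$, closed under uniform substitution, modus ponens and congruence rules for both arguments of $\mathrel{\Box\!\!\!\rightarrow}$. A conditional frame is $(X,\leq,\mathcal{R})$, $(X,\leq)$ a nonempty preorder, $\mathcal{R}=\{R_a\mid a\text{ an upset}\}$ with $(\leq\circ R_a)\subseteq(R_a\circ\leq)$; valuations assign upsets to letters and $x\models\phi\mathrel{\Box\!\!\!\rightarrow}\psi$ iff every $y$ with $xR_{V(\phi)}y$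 satisfies $\psi$. *)

theory Defs
  imports Main
begin

datatype fm =
    Var nat
  | Bot
  | And fm fm
  | Or fm fm
  | Imp fm fm
  | Cond fm fm

definition Top :: fm where "Top = Imp Bot Bot"
definition Iff :: "fm \<Rightarrow> fm \<Rightarrow> fm" where "Iff a b = And (Imp a b) (Imp b a)"

primrec subst :: "(nat \<Rightarrow> fm) \<Rightarrow> fm \<Rightarrow> fm" where
  "subst \<sigma> (Var n) = \<sigma> n"
| "subst \<sigma> Bot = Bot"
| "subst \<sigma> (And a b) = And (subst \<sigma> a) (subst \<sigma> b)"
| "subst \<sigma> (Or a b) = Or (subst \<sigma> a) (subst \<sigma> b)"
| "subst \<sigma> (Imp a b) = Imp (subst \<sigma> a) (subst \<sigma> b)"
| "subst \<sigma> (Cond a b) = Cond (subst \<sigma> a) (subst \<sigma> b)"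

abbreviation "P \<equiv> Var 0"
abbreviation "Q \<equiv> Var 1"
abbreviation "R \<equiv> Var 2"

text \<open>Hilbert-style axioms of intuitionistic propositional logic (with letters p,q,r;
  closure under uniform substitution yields all instances).\<close>
definition IPC_axioms :: "fm set" where
  "IPC_axioms = {
     Imp P (Imp Q P),
     Imp (Imp P (Imp Q R)) (Imp (Imp P Q) (Imp P R)),
     Imp (And P Q) P,
     Imp (And P Q) Q,
     Imp P (Imp Q (And P Q)),
     Imp P (Or P Q),
     Imp Q (Or P Q),
     Imp (Imp P R) (Imp (Imp Q R) (Imp (Or P Q) R)),
     Imp Bot P }"

definition ICK_axioms :: "fm set" where
  "ICK_axioms = {
     Iff (Cond P (And Q R)) (And (Cond P Q) (Cond P R)),
     Iff (Cond P Top) Top }"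

inductive_set ICK_ext :: "fm set \<Rightarrow> fm set" for \<Gamma> :: "fm set" where
  ax_ipc: "\<phi> \<in> IPC_axioms \<Longrightarrow> \<phi> \<in> ICK_ext \<Gamma>"
| ax_gamma: "\<phi> \<in> \<Gamma> \<Longrightarrow> \<phi> \<in> ICK_ext \<Gamma>"
| ax_ick: "\<phi> \<in> ICK_axioms \<Longrightarrow> \<phi> \<in> ICK_ext \<Gamma>"
| us: "\<phi> \<in> ICK_ext \<Gamma> \<Longrightarrow> subst \<sigma> \<phi> \<in> ICK_ext \<Gamma>"
| mp: "Imp \<phi> \<psi> \<in> ICK_ext \<Gamma> \<Longrightarrow> \<phi> \<in> ICK_ext \<Gamma> \<Longrightarrow> \<psi> \<in> ICK_ext \<Gamma>"
| cong_l: "Iff \<phi> \<psi> \<in> ICK_ext \<Gamma> \<Longrightarrow> Iff (Cond \<phi> \<chi>) (Cond \<psi> \<chi>) \<in> ICK_ext \<Gamma>"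
| cong_r: "Iff \<phi> \<psi> \<in> ICK_ext \<Gamma> \<Longrightarrow> Iff (Cond \<chi> \<phi>) (Cond \<chi> \<psi>) \<in> ICK_ext \<Gamma>"

definition L511 :: "fm set" where
  "L511 = ICK_ext {
     Cond P P,
     Imp (And (Cond P Q) (Cond Q R)) (Cond P R),
     Imp (Imp P Q) (Cond P Q) }"

definition upset :: "'w set \<Rightarrow> 'w rel \<Rightarrow> 'w set \<Rightarrow> bool" where
  "upset X le a \<longleftrightarrow> a \<subseteq> X \<and> (\<forall>x\<in>a. \<forall>y\<in>X. (x, y) \<in> le \<longrightarrow> y \<in> a)"

definition up :: "'w set \<Rightarrow> 'w rel \<Rightarrow> 'w set \<Rightarrow> 'w set" where
  "up X le S = {y \<in> X. \<exists>s\<in>S. (s, y) \<in> le}"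

text \<open>The values of R on non-upsets are irrelevant.\<close>
definition cframe :: "'w set \<Rightarrow> 'w rel \<Rightarrow> ('w set \<Rightarrow> 'w rel) \<Rightarrow> bool" where
  "cframe X le Rs \<longleftrightarrow>
     X \<noteq> {} \<and> le \<subseteq> X \<times> X \<and> refl_on X le \<and> trans le \<and>
     (\<forall>a. upset X le a \<longrightarrow> Rs a \<subseteq> X \<times> X \<and> le O Rs a \<subseteq> Rs a O le)"

definition valuation :: "'w set \<Rightarrow> 'w rel \<Rightarrow> (nat \<Rightarrow> 'w set) \<Rightarrow> bool" where
  "valuation X le V \<longleftrightarrow> (\<forall>n. upset X le (V n))"

primrec sat :: "'w set \<Rightarrow> 'w rel \<Rightarrow> ('w set \<Rightarrow> 'w rel) \<Rightarrow> (nat \<Rightarrow> 'w set) \<Rightarrow> 'w \<Rightarrow> fm \<Rightarrow> bool" where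
  "sat X le Rs V x (Var n) \<longleftrightarrow> x \<in> V n"
| "sat X le Rs V x Bot \<longleftrightarrow> False"
| "sat X le Rs V x (And a b) \<longleftrightarrow> sat X le Rs V x a \<and> sat X le Rs V x b"
| "sat X le Rs V x (Or a b) \<longleftrightarrow> sat X le Rs V x a \<or> sat X le Rs V x b"
| "sat X le Rs V x (Imp a b) \<longleftrightarrow>
     (\<forall>y\<in>X. (x, y) \<in> le \<longrightarrow> sat X le Rs V y a \<longrightarrow> sat X le Rs V y b)"
| "sat X le Rs V x (Cond a b) \<longleftrightarrow>
     (\<forall>y. (x, y) \<in> Rs {z \<in> X. sat X le Rs V z a} \<longrightarrow> sat X le Rs V y b)"

definition valid_frame :: "'w set \<Rightarrow> 'w rel \<Rightarrow> ('w set \<Rightarrow> 'w rel) \<Rightarrow> fm \<Rightarrow> bool" where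
  "valid_frame X le Rs \<phi> \<longleftrightarrow> (\<forall>V. valuation X le V \<longrightarrow> (\<forall>x\<in>X. sat X le Rs V x \<phi>))"

definition frame511 :: "'w set \<Rightarrow> 'w rel \<Rightarrow> ('w set \<Rightarrow> 'w rel) \<Rightarrow> bool" where
  "frame511 X le Rs \<longleftrightarrow> cframe X le Rs \<and>
     (\<forall>x\<in>X. \<forall>a. upset X le a \<longrightarrow>
        Rs a `` {x} \<subseteq> up X le {x} \<inter> a \<and>
        (\<forall>b. upset X le b \<longrightarrow> Rs a `` {x} \<subseteq> b \<longrightarrow> Rs a `` {x} \<subseteq> up X le (Rs b `` {x})))"

definition valid511 :: "'w itself \<Rightarrow> fm \<Rightarrow> bool" where
  "valid511 _ \<phi> \<longleftrightarrow>
     (\<forall>(X :: 'w set) le Rs. frame511 X le Rs \<longrightarrow> valid_frame X le Rs \<phi>)"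

end

theory Submission
  imports Defs
begin

section \<open>Soundness\<close>

lemma cf_sub: "cframe X le Rs \<Longrightarrow> le \<subseteq> X \<times> X"
  unfolding cframe_def by (elim conjE)
lemma cf_refl: "cframe X le Rs \<Longrightarrow> refl_on X le"
  unfolding cframe_def by (elim conjE)
lemma cf_trans: "cframe X le Rs \<Longrightarrow> trans le"
  unfolding cframe_def by (elim conjE)
lemma cf_R: "cframe X le Rs \<Longrightarrow> upset X le a \<Longrightarrow> Rs a \<subseteq> X \<times> X \<and> le O Rs a \<subseteq> Rs a O le"
proof -
  assume "cframe X le Rs" "upset X le a"
  then show ?thesis unfolding cframe_def by (elim conjE) (erule allE, erule impE)
qed
lemma cf_rf: "cframe X le Rs \<Longrightarrow> x \<in> X \<Longrightarrow> (x, x) \<in> le"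
  using cf_refl unfolding refl_on_def by blast
lemma cf_sb: "cframe X le Rs \<Longrightarrow> (x, y) \<in> le \<Longrightarrow> x \<in> X \<and> y \<in> X"
  using cf_sub by blast
lemma cf_tr: "cframe X le Rs \<Longrightarrow> (x, y) \<in> le \<Longrightarrow> (y, z) \<in> le \<Longrightarrow> (x, z) \<in> le"
  using cf_trans unfolding trans_def by blast
lemma fr_cf: "frame511 X le Rs \<Longrightarrow> cframe X le Rs"
  unfolding frame511_def by (elim conjE)

lemma persist:
  assumes cf: "cframe X le Rs" and v: "valuation X le V"
  shows "x \<in> X \<Longrightarrow> (x, y) \<in> le \<Longrightarrow> sat X le Rs V x \<phi> \<Longrightarrow> sat X le Rs V y \<phi>"
proof (induction \<phi> arbitrary: x y)
  case (Var n)
  have u: "upset X le (V n)" using v unfolding valuation_def by blast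
  have "y \<in> X" using cf_sb[OF cf Var.prems(2)] by blast
  then show ?case using u Var.prems unfolding upset_def by simp
next
  case Bot
  then show ?case by simp
next
  case (And a b)
  then show ?case by auto
next
  case (Or a b)
  then show ?case by auto
next
  case (Imp a b)
  show ?case using Imp.prems cf_tr[OF cf] by auto
next
  case (Cond a b)
  let ?A = "{z \<in> X. sat X le Rs V z a}"
  have up: "upset X le ?A" unfolding upset_def using Cond.IH(1) by blast
  then have R: "Rs ?A \<subseteq> X \<times> X" "le O Rs ?A \<subseteq> Rs ?A O le" using cf_R[OF cf] by auto
  show ?case
  proof (simp only: sat.simps, intro allI impI)
    fix u assume yu: "(y, u) \<in> Rs ?A"
    then have "(x, u) \<in> le O Rs ?A" using Cond.prems by auto
    then obtain v where xv: "(x, v) \<in> Rs ?A" and vu: "(v, u) \<in> le" using R by blast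
    have "sat X le Rs V v b" using Cond.prems(3) xv by simp
    moreover have "v \<in> X" using xv R by auto
    ultimately show "sat X le Rs V u b" using Cond.IH(2) vu by blast
  qed
qed

lemma upset_sat:
  assumes cf: "cframe X le Rs" and v: "valuation X le V"
  shows "upset X le {z \<in> X. sat X le Rs V z \<phi>}"
  unfolding upset_def using persist[OF cf v] by blast

lemma subst_sat:
  assumes cf: "cframe X le Rs" and v: "valuation X le V"
  shows "x \<in> X \<Longrightarrow> sat X le Rs V x (subst \<sigma> \<phi>) =
     sat X le Rs (\<lambda>n. {z \<in> X. sat X le Rs V z (\<sigma> n)}) x \<phi>"
proof (induction \<phi> arbitrary: x)
  case (Cond a b)
  let ?V' = "\<lambda>n. {z \<in> X. sat X le Rs V z (\<sigma> n)}"
  have eq: "{z \<in> X. sat X le Rs V z (subst \<sigma> a)} = {z \<in> X. sat X le Rs ?V' z a}"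
    using Cond.IH(1) by blast
  have up: "upset X le {z \<in> X. sat X le Rs V z (subst \<sigma> a)}" using upset_sat[OF cf v] .
  then have R: "Rs {z \<in> X. sat X le Rs V z (subst \<sigma> a)} \<subseteq> X \<times> X" using cf_R[OF cf] by auto
  show ?case
    apply (simp only: subst.simps sat.simps eq[symmetric])
    using R Cond.IH(2) by blast
next
  case (Var n) then show ?case by simp
next
  case Bot then show ?case by simp
next
  case (And a b) then show ?case by (simp only: subst.simps sat.simps)
next
  case (Or a b) then show ?case by (simp only: subst.simps sat.simps)
next
  case (Imp a b)
  show ?case apply (simp only: subst.simps sat.simps)
    apply (rule ball_cong[OF refl])
    using Imp.IH by simp
qed

lemma ipc_valid:
  assumes cf: "cframe X le Rs" and v: "valuation X le V" and x: "x \<in> X" and ax: "\<phi> \<in> IPC_axioms"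
  shows "sat X le Rs V x \<phi>"
proof -
  note tr = cf_tr[OF cf]
  note sub = cf_sb[OF cf]
  note rf = cf_rf[OF cf]
  note ps = persist[OF cf v]
  from ax show ?thesis unfolding IPC_axioms_def
    apply (elim insertE emptyE)
    subgoal apply (simp only: sat.simps(2-6))
      by (intro ballI impI) (metis ps sub)
    subgoal apply (simp only: sat.simps(2-6))
    proof (intro ballI impI)
      fix y z u
      assume y: "y \<in> X" "(x, y) \<in> le" and hy: "\<forall>z\<in>X. (y, z) \<in> le \<longrightarrow> sat X le Rs V z P \<longrightarrow>
               (\<forall>u\<in>X. (z, u) \<in> le \<longrightarrow> sat X le Rs V u Q \<longrightarrow> sat X le Rs V u R)"
        and z: "z \<in> X" "(y, z) \<in> le" and hz: "\<forall>u\<in>X. (z, u) \<in> le \<longrightarrow> sat X le Rs V u P \<longrightarrow> sat X le Rs V u Q"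
        and u: "u \<in> X" "(z, u) \<in> le" "sat X le Rs V u P"
      have yu: "(y, u) \<in> le" using tr z(2) u(2) .
      have "sat X le Rs V u Q" using hz u by blast
      moreover have "\<forall>w\<in>X. (u, w) \<in> le \<longrightarrow> sat X le Rs V w Q \<longrightarrow> sat X le Rs V w R"
        using hy u(1) yu u(3) by blast
      ultimately show "sat X le Rs V u R" using u(1) rf[OF u(1)] by blast
    qed
    subgoal by (simp only: sat.simps(2-6)) blast
    subgoal by (simp only: sat.simps(2-6)) blast
    subgoal apply (simp only: sat.simps(2-6))
      by (intro ballI impI conjI) (metis ps sub)+
    subgoal by (simp only: sat.simps(2-6)) blast
    subgoal by (simp only: sat.simps(2-6)) blast
    subgoal apply (simp only: sat.simps(2-6))
    proof (intro ballI impI)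
      fix y z u
      assume y: "y \<in> X" "(x, y) \<in> le" and hy: "\<forall>z\<in>X. (y, z) \<in> le \<longrightarrow> sat X le Rs V z P \<longrightarrow> sat X le Rs V z R"
        and z: "z \<in> X" "(y, z) \<in> le" and hz: "\<forall>u\<in>X. (z, u) \<in> le \<longrightarrow> sat X le Rs V u Q \<longrightarrow> sat X le Rs V u R"
        and u: "u \<in> X" "(z, u) \<in> le" "sat X le Rs V u P \<or> sat X le Rs V u Q"
      have yu: "(y, u) \<in> le" using tr z(2) u(2) .
      show "sat X le Rs V u R"
      proof (cases "sat X le Rs V u P")
        case True then show ?thesis using hy u(1) yu by blast
      next
        case False then have "sat X le Rs V u Q" using u(3) by blast
        then show ?thesis using hz u by blast
      qed
    qed
    subgoal by (simp only: sat.simps(2-6)) blast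
    done
qed

lemma sound_L:
  assumes "\<phi> \<in> L511" and fr: "frame511 X le Rs"
  shows "valuation X le V \<Longrightarrow> x \<in> X \<Longrightarrow> sat X le Rs V x \<phi>"
  using assms(1) unfolding L511_def
proof (induction arbitrary: V x rule: ICK_ext.induct)
  case (ax_ipc \<phi>)
  have cf: "cframe X le Rs" using fr_cf[OF fr] .
  show ?case using ipc_valid[OF cf ax_ipc.prems ax_ipc.hyps] .
next
  case (ax_gamma \<phi> V x)
  have cf: "cframe X le Rs" using fr_cf[OF fr] .
  note sub = cf_sb[OF cf]
  note ps = persist[OF cf ax_gamma.prems(1)]
  note us = upset_sat[OF cf ax_gamma.prems(1)]
  have F: "\<And>x a. x \<in> X \<Longrightarrow> upset X le a \<Longrightarrow> Rs a `` {x} \<subseteq> up X le {x} \<inter> a \<and>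
        (\<forall>b. upset X le b \<longrightarrow> Rs a `` {x} \<subseteq> b \<longrightarrow> Rs a `` {x} \<subseteq> up X le (Rs b `` {x}))"
    using fr unfolding frame511_def by blast
  have RX: "\<And>a. upset X le a \<Longrightarrow> Rs a \<subseteq> X \<times> X" using cf_R[OF cf] by blast
  from ax_gamma.hyps consider "\<phi> = Cond P P" | "\<phi> = Imp (And (Cond P Q) (Cond Q R)) (Cond P R)"
    | "\<phi> = Imp (Imp P Q) (Cond P Q)" by blast
  then show ?case
  proof cases
    case 1
    show ?thesis unfolding 1 using F[OF ax_gamma.prems(2) us[of P]] by auto
  next
    case 2
    show ?thesis unfolding 2
    proof (simp only: sat.simps(3,5,6), intro ballI impI allI)
      fix y u assume y: "y \<in> X" and xy: "(x, y) \<in> le"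
        and h: "(\<forall>u. (y, u) \<in> Rs {z \<in> X. sat X le Rs V z P} \<longrightarrow> sat X le Rs V u Q) \<and>
           (\<forall>u. (y, u) \<in> Rs {z \<in> X. sat X le Rs V z Q} \<longrightarrow> sat X le Rs V u R)"
        and yu: "(y, u) \<in> Rs {z \<in> X. sat X le Rs V z P}"
      have "Rs {z \<in> X. sat X le Rs V z P} `` {y} \<subseteq> {z \<in> X. sat X le Rs V z Q}"
        using h RX[OF us[of P]] by auto
      then have "Rs {z \<in> X. sat X le Rs V z P} `` {y} \<subseteq> up X le (Rs {z \<in> X. sat X le Rs V z Q} `` {y})"
        using F[OF y us[of P]] us[of Q] by blast
      then obtain s where s: "(y, s) \<in> Rs {z \<in> X. sat X le Rs V z Q}" "(s, u) \<in> le"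
        using yu unfolding up_def by blast
      then show "sat X le Rs V u R" using h ps sub by blast
    qed
  next
    case 3
    have "\<And>y u. y \<in> X \<Longrightarrow> (y, u) \<in> Rs {z \<in> X. sat X le Rs V z P} \<Longrightarrow>
       (y, u) \<in> le \<and> u \<in> X \<and> sat X le Rs V u P"
      using F us[of P] unfolding up_def by blast
    note H = this
    show ?thesis unfolding 3
      apply (simp only: sat.simps(2-6))
    proof (intro ballI impI allI)
      fix y u assume "y \<in> X" "(x, y) \<in> le"
        and h: "\<forall>z\<in>X. (y, z) \<in> le \<longrightarrow> sat X le Rs V z P \<longrightarrow> sat X le Rs V z Q"
        and "(y, u) \<in> Rs {z \<in> X. sat X le Rs V z P}"
      then have "(y, u) \<in> le \<and> u \<in> X \<and> sat X le Rs V u P" using H by blast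
      then show "sat X le Rs V u Q" using h by blast
    qed
  qed
next
  case (ax_ick \<phi>)
  then show ?case unfolding ICK_axioms_def Iff_def Top_def by auto
next
  case (us \<phi> \<sigma>)
  have cf: "cframe X le Rs" using fr_cf[OF fr] .
  have "valuation X le (\<lambda>n. {z \<in> X. sat X le Rs V z (\<sigma> n)})"
    unfolding valuation_def using upset_sat[OF cf us.prems(1)] by blast
  then show ?case using us subst_sat[OF cf us.prems(1)] by blast
next
  case (mp \<phi> \<psi>)
  have "(x, x) \<in> le" using cf_rf[OF fr_cf[OF fr] mp.prems(2)] .
  then show ?case using mp by auto
next
  case (cong_l \<phi> \<psi> \<chi>)
  have "{z \<in> X. sat X le Rs V z \<phi>} = {z \<in> X. sat X le Rs V z \<psi>}"
    using cong_l cf_rf[OF fr_cf[OF fr]] unfolding Iff_def by auto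
  then show ?case unfolding Iff_def by simp
next
  case (cong_r \<phi> \<psi> \<chi>)
  have "\<forall>z\<in>X. sat X le Rs V z \<phi> = sat X le Rs V z \<psi>"
    using cong_r cf_rf[OF fr_cf[OF fr]] unfolding Iff_def by auto
  moreover have "Rs {z \<in> X. sat X le Rs V z \<chi>} \<subseteq> X \<times> X"
    using cf_R[OF fr_cf[OF fr] upset_sat[OF fr_cf[OF fr] cong_r.prems(1)]] by blast
  ultimately show ?case unfolding Iff_def by auto
qed

section \<open>Derivations in L511\<close>

definition sg :: "fm \<Rightarrow> fm \<Rightarrow> fm \<Rightarrow> nat \<Rightarrow> fm" where
  "sg a b c = (\<lambda>n. if n = 0 then a else if n = 1 then b else c)"

lemma sg_simps[simp]: "sg a b c 0 = a" "sg a b c (Suc 0) = b" "sg a b c 2 = c"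
  unfolding sg_def by auto

lemma Lipc: "\<phi> \<in> IPC_axioms \<Longrightarrow> subst \<sigma> \<phi> \<in> L511"
  unfolding L511_def by (intro ICK_ext.us ICK_ext.ax_ipc)

lemma Lgam: "\<phi> \<in> {Cond P P, Imp (And (Cond P Q) (Cond Q R)) (Cond P R), Imp (Imp P Q) (Cond P Q)}
   \<Longrightarrow> subst \<sigma> \<phi> \<in> L511"
  unfolding L511_def by (intro ICK_ext.us ICK_ext.ax_gamma)

lemma Lick: "\<phi> \<in> ICK_axioms \<Longrightarrow> subst \<sigma> \<phi> \<in> L511"
  unfolding L511_def by (intro ICK_ext.us ICK_ext.ax_ick)

lemma Lmp: "Imp a b \<in> L511 \<Longrightarrow> a \<in> L511 \<Longrightarrow> b \<in> L511"
  unfolding L511_def by (rule ICK_ext.mp)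

lemma LK: "Imp a (Imp b a) \<in> L511"
  using Lipc[of "Imp P (Imp Q P)" "sg a b a"] unfolding IPC_axioms_def by simp
lemma LS: "Imp (Imp a (Imp b c)) (Imp (Imp a b) (Imp a c)) \<in> L511"
  using Lipc[of "Imp (Imp P (Imp Q R)) (Imp (Imp P Q) (Imp P R))" "sg a b c"] unfolding IPC_axioms_def by simp
lemma LA1: "Imp (And a b) a \<in> L511"
  using Lipc[of "Imp (And P Q) P" "sg a b a"] unfolding IPC_axioms_def by simp
lemma LA2: "Imp (And a b) b \<in> L511"
  using Lipc[of "Imp (And P Q) Q" "sg a b a"] unfolding IPC_axioms_def by simp
lemma LAI: "Imp a (Imp b (And a b)) \<in> L511"
  using Lipc[of "Imp P (Imp Q (And P Q))" "sg a b a"] unfolding IPC_axioms_def by simp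
lemma LO1: "Imp a (Or a b) \<in> L511"
  using Lipc[of "Imp P (Or P Q)" "sg a b a"] unfolding IPC_axioms_def by simp
lemma LO2: "Imp b (Or a b) \<in> L511"
  using Lipc[of "Imp Q (Or P Q)" "sg a b a"] unfolding IPC_axioms_def by simp
lemma LOE: "Imp (Imp a c) (Imp (Imp b c) (Imp (Or a b) c)) \<in> L511"
  using Lipc[of "Imp (Imp P R) (Imp (Imp Q R) (Imp (Or P Q) R))" "sg a b c"] unfolding IPC_axioms_def by simp
lemma LB: "Imp Bot a \<in> L511"
  using Lipc[of "Imp Bot P" "sg a a a"] unfolding IPC_axioms_def by simp
lemma LCid: "Cond a a \<in> L511"
  using Lgam[of "Cond P P" "sg a a a"] by simp
lemma LCtr: "Imp (And (Cond a b) (Cond b c)) (Cond a c) \<in> L511"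
  using Lgam[of "Imp (And (Cond P Q) (Cond Q R)) (Cond P R)" "sg a b c"] by simp
lemma LCimp: "Imp (Imp a b) (Cond a b) \<in> L511"
  using Lgam[of "Imp (Imp P Q) (Cond P Q)" "sg a b a"] by simp
lemma LCand: "Imp (And (Cond a b) (Cond a c)) (Cond a (And b c)) \<in> L511"
proof -
  have "Iff (Cond a (And b c)) (And (Cond a b) (Cond a c)) \<in> L511"
    using Lick[of "Iff (Cond P (And Q R)) (And (Cond P Q) (Cond P R))" "sg a b c"]
    unfolding ICK_axioms_def Iff_def by simp
  then show ?thesis unfolding Iff_def using Lmp[OF LA2] by blast
qed

lemma Lid: "Imp a a \<in> L511"
  using Lmp[OF Lmp[OF LS[of a "Imp a a" a] LK] LK] .

lemma LMPc: "Imp (And (Imp c d) c) d \<in> L511"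
  using Lmp[OF Lmp[OF LS[of "And (Imp c d) c" c d] LA1] LA2] .

section \<open>Theories\<close>

definition thy :: "fm set \<Rightarrow> bool" where
  "thy T \<longleftrightarrow> L511 \<subseteq> T \<and> (\<forall>a b. Imp a b \<in> T \<longrightarrow> a \<in> T \<longrightarrow> b \<in> T)"

definition pth :: "fm set \<Rightarrow> bool" where
  "pth T \<longleftrightarrow> thy T \<and> Bot \<notin> T \<and> (\<forall>a b. Or a b \<in> T \<longrightarrow> a \<in> T \<or> b \<in> T)"

lemma thyL: "thy T \<Longrightarrow> a \<in> L511 \<Longrightarrow> a \<in> T"
  unfolding thy_def by auto
lemma thyMP: "thy T \<Longrightarrow> Imp a b \<in> T \<Longrightarrow> a \<in> T \<Longrightarrow> b \<in> T"
  unfolding thy_def by auto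
lemma thyLMP: "thy T \<Longrightarrow> Imp a b \<in> L511 \<Longrightarrow> a \<in> T \<Longrightarrow> b \<in> T"
  using thyL thyMP by blast

lemma thy_and: "thy T \<Longrightarrow> And a b \<in> T \<longleftrightarrow> a \<in> T \<and> b \<in> T"
  using thyLMP[OF _ LA1] thyLMP[OF _ LA2] thyMP[OF _ thyLMP[OF _ LAI]] by blast

lemma thy_K: "thy T \<Longrightarrow> a \<in> T \<Longrightarrow> Imp c a \<in> T"
  using thyLMP[OF _ LK] by blast

lemma thy_L511: "thy L511"
  unfolding thy_def using Lmp by blast

lemma thy_Ctr: "thy T \<Longrightarrow> Cond a b \<in> T \<Longrightarrow> Cond b c \<in> T \<Longrightarrow> Cond a c \<in> T"
  using thyLMP[OF _ LCtr] thy_and by blast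

lemma thy_Cmono: "thy T \<Longrightarrow> Imp m d \<in> L511 \<Longrightarrow> Cond a m \<in> T \<Longrightarrow> Cond a d \<in> T"
  using thy_Ctr thyL Lmp[OF LCimp] by blast

lemma thy_Cand: "thy T \<Longrightarrow> Cond a b \<in> T \<Longrightarrow> Cond a c \<in> T \<Longrightarrow> Cond a (And b c) \<in> T"
  using thyLMP[OF _ LCand] thy_and by blast

definition Sc :: "fm set \<Rightarrow> fm \<Rightarrow> fm set" where
  "Sc w a = {c. Cond a c \<in> w}"

lemma thy_Sc: "thy T \<Longrightarrow> thy (Sc T a)"
  unfolding Sc_def thy_def[of "{c. Cond a c \<in> T}"]
proof (intro conjI subsetI allI impI; simp)
  fix c assume T: "thy T" and "c \<in> L511"
  then have "Imp a c \<in> L511" using Lmp[OF LK] by blast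
  then show "Cond a c \<in> T" using T thyL Lmp[OF LCimp] by blast
next
  fix b c assume T: "thy T" and "Cond a (Imp b c) \<in> T" "Cond a b \<in> T"
  then have "Cond a (And (Imp b c) b) \<in> T" using thy_Cand by blast
  then show "Cond a c \<in> T" using thy_Cmono[OF T LMPc] by blast
qed

lemma sub_Sc: "thy T \<Longrightarrow> T \<subseteq> Sc T a"
  unfolding Sc_def using thy_K thyLMP[OF _ LCimp] by blast

lemma thy_Imp: "thy T \<Longrightarrow> thy {c. Imp a c \<in> T}"
  unfolding thy_def[of "{c. Imp a c \<in> T}"]
proof (intro conjI subsetI allI impI; simp)
  fix c assume T: "thy T" and "c \<in> L511"
  then show "Imp a c \<in> T" using Lmp[OF LK] thyL by blast
next
  fix b c assume T: "thy T" and "Imp a (Imp b c) \<in> T" "Imp a b \<in> T"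
  then show "Imp a c \<in> T" using thyLMP[OF T LS] thyMP[OF T] by blast
qed

lemma prime_ext:
  assumes T: "thy T" and psi: "\<psi> \<notin> T"
  shows "\<exists>M. pth M \<and> T \<subseteq> M \<and> \<psi> \<notin> M"
proof -
  define A where "A = {M. thy M \<and> T \<subseteq> M \<and> \<psi> \<notin> M}"
  have "\<forall>C\<in>chains A. \<exists>U\<in>A. \<forall>X\<in>C. X \<subseteq> U"
  proof
    fix C assume C: "C \<in> chains A"
    let ?U = "T \<union> \<Union>C"
    have CA: "\<And>M. M \<in> C \<Longrightarrow> thy M \<and> T \<subseteq> M \<and> \<psi> \<notin> M" using C unfolding chains_def A_def by blast
    have ch: "\<And>M N. M \<in> C \<Longrightarrow> N \<in> C \<Longrightarrow> M \<subseteq> N \<or> N \<subseteq> M"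
      using C unfolding chains_def chain_subset_def by blast
    have "thy ?U" unfolding thy_def
    proof (intro conjI allI impI)
      show "L511 \<subseteq> ?U" using T unfolding thy_def by blast
    next
      fix a b assume ab: "Imp a b \<in> ?U" and a: "a \<in> ?U"
      have "\<exists>M\<in>insert T C. Imp a b \<in> M \<and> a \<in> M"
      proof -
        obtain M1 where M1: "M1 \<in> insert T C" "Imp a b \<in> M1" using ab by blast
        obtain M2 where M2: "M2 \<in> insert T C" "a \<in> M2" using a by blast
        have "M1 \<subseteq> M2 \<or> M2 \<subseteq> M1" using M1(1) M2(1) ch CA by blast
        then show ?thesis using M1 M2 by blast
      qed
      then obtain M where "M \<in> insert T C" "Imp a b \<in> M" "a \<in> M" by blast
      then have "b \<in> M" using T CA thyMP by blast
      then show "b \<in> ?U" using \<open>M \<in> insert T C\<close> by blast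
    qed
    note tU = this
    have "\<psi> \<notin> ?U" using psi CA by blast
    then have "?U \<in> A" unfolding A_def using tU by simp
    moreover have "\<forall>X\<in>C. X \<subseteq> ?U" by blast
    ultimately show "\<exists>U\<in>A. \<forall>X\<in>C. X \<subseteq> U" by blast
  qed
  then have "\<exists>M\<in>A. \<forall>X\<in>A. M \<subseteq> X \<longrightarrow> X = M" by (rule Zorn_Lemma2)
  then obtain M where MA: "M \<in> A" and max: "\<forall>X\<in>A. M \<subseteq> X \<longrightarrow> X = M"
    by (elim bexE)
  have M: "thy M" "T \<subseteq> M" "\<psi> \<notin> M" using MA unfolding A_def by auto
  have key: "\<And>a. a \<notin> M \<Longrightarrow> Imp a \<psi> \<in> M"
  proof (rule ccontr)
    fix a assume a: "a \<notin> M" and n: "Imp a \<psi> \<notin> M"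
    let ?N = "{c. Imp a c \<in> M}"
    have "?N \<in> A" unfolding A_def using thy_Imp[OF M(1)] M(2) thy_K[OF M(1)] n by blast
    moreover have "M \<subseteq> ?N" using thy_K[OF M(1)] by blast
    ultimately have "?N = M" using max by blast
    moreover have "a \<in> ?N" using thyL[OF M(1) Lid] by blast
    ultimately show False using a by blast
  qed
  have "Bot \<notin> M" using M thyLMP[OF M(1) LB] by blast
  moreover have "\<forall>a b. Or a b \<in> M \<longrightarrow> a \<in> M \<or> b \<in> M"
  proof (intro allI impI)
    fix a b assume o: "Or a b \<in> M"
    show "a \<in> M \<or> b \<in> M"
    proof (rule ccontr)
      assume "\<not> (a \<in> M \<or> b \<in> M)"
      then have "Imp a \<psi> \<in> M" "Imp b \<psi> \<in> M" using key by auto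
      then have "\<psi> \<in> M" using thyLMP[OF M(1) LOE] thyMP[OF M(1)] o by blast
      then show False using M by blast
    qed
  qed
  ultimately show ?thesis unfolding pth_def using M by blast
qed

section \<open>Canonical model\<close>

definition Wc :: "fm set set" where "Wc = {x. pth x}"
definition lec :: "fm set rel" where "lec = {(x, y). x \<in> Wc \<and> y \<in> Wc \<and> x \<subseteq> y}"
definition Rc :: "fm set set \<Rightarrow> fm set rel" where
  "Rc a = {(x, y). x \<in> Wc \<and> y \<in> Wc \<and>
     (\<exists>w\<in>Wc. \<exists>\<phi>. x \<subseteq> w \<and> Sc w \<phi> \<subseteq> y \<and> (\<forall>z\<in>Wc. Sc w \<phi> \<subseteq> z \<longrightarrow> z \<in> a))}"
definition Vc :: "nat \<Rightarrow> fm set set" where "Vc n = {x \<in> Wc. Var n \<in> x}"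

lemma pth_thy: "x \<in> Wc \<Longrightarrow> thy x"
  unfolding Wc_def pth_def by auto

lemma RcI: "x \<in> Wc \<Longrightarrow> y \<in> Wc \<Longrightarrow> w \<in> Wc \<Longrightarrow> x \<subseteq> w \<Longrightarrow> Sc w \<phi> \<subseteq> y \<Longrightarrow>
   (\<forall>z\<in>Wc. Sc w \<phi> \<subseteq> z \<longrightarrow> z \<in> a) \<Longrightarrow> (x, y) \<in> Rc a"
  unfolding Rc_def by auto

lemma RcE: "(x, y) \<in> Rc a \<Longrightarrow> (\<And>w \<phi>. x \<in> Wc \<Longrightarrow> y \<in> Wc \<Longrightarrow> w \<in> Wc \<Longrightarrow> x \<subseteq> w \<Longrightarrow> Sc w \<phi> \<subseteq> y \<Longrightarrow>
   (\<forall>z\<in>Wc. Sc w \<phi> \<subseteq> z \<longrightarrow> z \<in> a) \<Longrightarrow> thesis) \<Longrightarrow> thesis"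
  unfolding Rc_def by auto

lemma truth: "x \<in> Wc \<Longrightarrow> sat Wc lec Rc Vc x \<phi> \<longleftrightarrow> \<phi> \<in> x"
proof (induction \<phi> arbitrary: x)
  case (Var n)
  then show ?case unfolding Vc_def by simp
next
  case Bot
  then show ?case unfolding Wc_def pth_def by simp
next
  case (And a b)
  have "And a b \<in> x \<longleftrightarrow> a \<in> x \<and> b \<in> x" using thy_and[OF pth_thy[OF And.prems]] .
  then show ?case using And.IH[OF And.prems] by (simp only: sat.simps)
next
  case (Or a b)
  have "Or a b \<in> x \<longleftrightarrow> a \<in> x \<or> b \<in> x"
    using thyLMP[OF pth_thy[OF Or.prems] LO1] thyLMP[OF pth_thy[OF Or.prems] LO2] Or.prems
    unfolding Wc_def pth_def by blast
  then show ?case using Or.IH[OF Or.prems] by (simp only: sat.simps)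
next
  case (Imp a b)
  show ?case
  proof
    assume s: "sat Wc lec Rc Vc x (Imp a b)"
    show "Imp a b \<in> x"
    proof (rule ccontr)
      assume n: "Imp a b \<notin> x"
      obtain y where y: "pth y" "{c. Imp a c \<in> x} \<subseteq> y" "b \<notin> y"
        using prime_ext[OF thy_Imp[OF pth_thy[OF Imp.prems]] ] n by blast
      have yW: "y \<in> Wc" using y unfolding Wc_def by simp
      have "x \<subseteq> y" using y(2) thy_K[OF pth_thy[OF Imp.prems]] by blast
      then have "(x, y) \<in> lec" using yW Imp.prems unfolding lec_def by simp
      moreover have "a \<in> y" using y(2) thyL[OF pth_thy[OF Imp.prems] Lid] by blast
      ultimately have "b \<in> y" using s yW Imp.IH by auto
      then show False using y by blast
    qed
  next
    assume i: "Imp a b \<in> x"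
    show "sat Wc lec Rc Vc x (Imp a b)"
      using i Imp.IH thyMP[OF pth_thy] unfolding lec_def by auto
  qed
next
  case (Cond a b)
  have xT: "thy x" using pth_thy[OF Cond.prems] .
  have A: "{z \<in> Wc. sat Wc lec Rc Vc z a} = {z \<in> Wc. a \<in> z}" using Cond.IH(1) by blast
  show ?case
  proof
    assume s: "sat Wc lec Rc Vc x (Cond a b)"
    show "Cond a b \<in> x"
    proof (rule ccontr)
      assume n: "Cond a b \<notin> x"
      have n': "b \<notin> Sc x a" using n unfolding Sc_def by simp
      obtain y where y: "pth y" "Sc x a \<subseteq> y" "b \<notin> y"
        using prime_ext[OF thy_Sc[OF xT] n'] by (elim exE conjE)
      have yW: "y \<in> Wc" using y unfolding Wc_def by simp
      have aS: "a \<in> Sc x a" using thyL[OF xT LCid] unfolding Sc_def by simp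
      have all: "\<forall>z\<in>Wc. Sc x a \<subseteq> z \<longrightarrow> z \<in> {z \<in> Wc. a \<in> z}"
        using aS by blast
      have "\<exists>w\<in>Wc. \<exists>\<phi>. x \<subseteq> w \<and> Sc w \<phi> \<subseteq> y \<and> (\<forall>z\<in>Wc. Sc w \<phi> \<subseteq> z \<longrightarrow> z \<in> {z \<in> Wc. a \<in> z})"
        apply (rule bexI[where x=x])
         apply (rule exI[where x=a])
        using all y(2) Cond.prems by auto
      then have "(x, y) \<in> Rc {z \<in> Wc. a \<in> z}"
        unfolding Rc_def using Cond.prems yW by simp
      then have "sat Wc lec Rc Vc y b" using s A by simp
      then show False using Cond.IH(2)[OF yW] y by blast
    qed
  next
    assume c: "Cond a b \<in> x"
    show "sat Wc lec Rc Vc x (Cond a b)"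
    proof (simp only: sat.simps(6) A, intro allI impI)
      fix y assume "(x, y) \<in> Rc {z \<in> Wc. a \<in> z}"
      then obtain w \<phi> where yW: "y \<in> Wc" and w: "w \<in> Wc" "x \<subseteq> w" "Sc w \<phi> \<subseteq> y"
        and all0: "\<forall>z\<in>Wc. Sc w \<phi> \<subseteq> z \<longrightarrow> z \<in> {z \<in> Wc. a \<in> z}"
        by (rule RcE)
      have all: "\<forall>z\<in>Wc. Sc w \<phi> \<subseteq> z \<longrightarrow> a \<in> z" using all0 by simp
      have wT: "thy w" using pth_thy[OF w(1)] .
      have "a \<in> Sc w \<phi>"
      proof (rule ccontr)
        assume "a \<notin> Sc w \<phi>"
        then obtain z where "pth z" "Sc w \<phi> \<subseteq> z" "a \<notin> z"
          using prime_ext[OF thy_Sc[OF wT]] by blast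
        then show False using all unfolding Wc_def by blast
      qed
      then have "Cond \<phi> b \<in> w" using thy_Ctr[OF wT] c w(2) unfolding Sc_def by blast
      then have "b \<in> y" using w(3) unfolding Sc_def by blast
      then show "sat Wc lec Rc Vc y b" using Cond.IH(2)[OF yW] by blast
    qed
  qed
qed

lemma canon_frame:
  assumes ne: "Wc \<noteq> {}"
  shows "frame511 Wc lec Rc"
proof -
  have cf: "cframe Wc lec Rc"
    unfolding cframe_def
  proof (intro conjI allI impI)
    show "Wc \<noteq> {}" using ne .
    show "lec \<subseteq> Wc \<times> Wc" unfolding lec_def by auto
    show "refl_on Wc lec" unfolding lec_def refl_on_def by auto
    show "trans lec" unfolding lec_def trans_def by auto
    fix a show "Rc a \<subseteq> Wc \<times> Wc" unfolding Rc_def by auto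
    show "lec O Rc a \<subseteq> Rc a O lec"
    proof
      fix p assume "p \<in> lec O Rc a"
      then obtain x x' y where p: "p = (x, y)" "(x, x') \<in> lec" "(x', y) \<in> Rc a" by blast
      from p(3) obtain w \<phi> where w: "x' \<in> Wc" "y \<in> Wc" "w \<in> Wc" "x' \<subseteq> w" "Sc w \<phi> \<subseteq> y"
        "\<forall>z\<in>Wc. Sc w \<phi> \<subseteq> z \<longrightarrow> z \<in> a" by (rule RcE)
      have "x \<in> Wc" "x \<subseteq> x'" using p(2) unfolding lec_def by auto
      then have "(x, y) \<in> Rc a" using w by (intro RcI[of x y w]) auto
      moreover have "(y, y) \<in> lec" using w unfolding lec_def by auto
      ultimately show "p \<in> Rc a O lec" using p by blast
    qed
  qed
  have "\<forall>x\<in>Wc. \<forall>a. upset Wc lec a \<longrightarrow>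
        Rc a `` {x} \<subseteq> up Wc lec {x} \<inter> a \<and>
        (\<forall>b. upset Wc lec b \<longrightarrow> Rc a `` {x} \<subseteq> b \<longrightarrow> Rc a `` {x} \<subseteq> up Wc lec (Rc b `` {x}))"
  proof (intro ballI allI impI conjI)
    fix x a assume x: "x \<in> Wc" and ua: "upset Wc lec a"
    show "Rc a `` {x} \<subseteq> up Wc lec {x} \<inter> a"
    proof
      fix y assume "y \<in> Rc a `` {x}"
      then have "(x, y) \<in> Rc a" by simp
      then obtain w \<phi> where yW: "y \<in> Wc" and w: "w \<in> Wc" "x \<subseteq> w" "Sc w \<phi> \<subseteq> y"
        and all: "\<forall>z\<in>Wc. Sc w \<phi> \<subseteq> z \<longrightarrow> z \<in> a"
        by (rule RcE)
      have "w \<subseteq> Sc w \<phi>" using sub_Sc[OF pth_thy[OF w(1)]] .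
      then have "(x, y) \<in> lec" using x yW w unfolding lec_def by auto
      then show "y \<in> up Wc lec {x} \<inter> a" using all w yW unfolding up_def by blast
    qed
    fix b assume ub: "upset Wc lec b" and sb: "Rc a `` {x} \<subseteq> b"
    show "Rc a `` {x} \<subseteq> up Wc lec (Rc b `` {x})"
    proof
      fix y assume y: "y \<in> Rc a `` {x}"
      then have "(x, y) \<in> Rc a" by simp
      then obtain w \<phi> where yW: "y \<in> Wc" and w: "w \<in> Wc" "x \<subseteq> w" "Sc w \<phi> \<subseteq> y"
        and all: "\<forall>z\<in>Wc. Sc w \<phi> \<subseteq> z \<longrightarrow> z \<in> a"
        by (rule RcE)
      have "\<forall>z\<in>Wc. Sc w \<phi> \<subseteq> z \<longrightarrow> z \<in> b"
      proof (intro ballI impI)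
        fix z assume "z \<in> Wc" "Sc w \<phi> \<subseteq> z"
        then have "(x, z) \<in> Rc a" using x w all by (intro RcI[of x z w]) auto
        then have "z \<in> Rc a `` {x}" by simp
        then show "z \<in> b" using sb by blast
      qed
      then have "(x, y) \<in> Rc b" using x yW w by (intro RcI[of x y w]) auto
      moreover have "(y, y) \<in> lec" using yW unfolding lec_def by auto
      ultimately show "y \<in> up Wc lec (Rc b `` {x})" using yW unfolding up_def by blast
    qed
  qed
  then show ?thesis unfolding frame511_def using cf by blast
qed

lemma completeness:
  assumes v: "valid511 TYPE(fm set) \<phi>"
  shows "\<phi> \<in> L511"
proof (rule ccontr)
  assume n: "\<phi> \<notin> L511"
  obtain M where M: "pth M" "\<phi> \<notin> M" using prime_ext[OF thy_L511 n] by blast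
  have MW: "M \<in> Wc" using M unfolding Wc_def by simp
  have ne: "Wc \<noteq> {}" using MW by blast
  have fr: "frame511 Wc lec Rc" using canon_frame[OF ne] .
  have val: "valuation Wc lec Vc"
    unfolding valuation_def upset_def Vc_def lec_def by blast
  have "\<forall>(X :: fm set set) le Rs. frame511 X le Rs \<longrightarrow> valid_frame X le Rs \<phi>"
    using v unfolding valid511_def .
  then have "valid_frame Wc lec Rc \<phi>" using fr by blast
  then have "\<forall>x\<in>Wc. sat Wc lec Rc Vc x \<phi>" using val unfolding valid_frame_def by blast
  then have "sat Wc lec Rc Vc M \<phi>" using MW by blast
  then have "\<phi> \<in> M" using truth[OF MW] by blast
  then show False using M(2) by contradiction
qed

theorem theorem5p11:
  shows "(\<phi> \<in> L511 \<longrightarrow> valid511 TYPE('w) \<phi>) \<and> (valid511 TYPE(fm set) \<phi> \<longrightarrow> \<phi> \<in> L511)"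
proof (intro conjI impI)
  assume "\<phi> \<in> L511"
  note h = this
  show "valid511 TYPE('w) \<phi>" unfolding valid511_def valid_frame_def
  proof (intro allI impI ballI)
    fix X :: "'w set" and le Rs V x
    assume "frame511 X le Rs" "valuation X le V" "x \<in> X"
    then show "sat X le Rs V x \<phi>" by (rule sound_L[OF h])
  qed
next
  assume "valid511 TYPE(fm set) \<phi>"
  then show "\<phi> \<in> L511" by (rule completeness)
qed

end
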